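(* Let $S$ be a powerful set with ground set $E$. For every $e\in E$, both the contraction $S/e$ and the deletion $S\setminus e$ are powerful multisets.
   Context: A set $S\subseteq 2^E$ is powerful if for every $X\subseteq E$ the number of members of $S$ contained in $X$ is a power of 2; view it as a multiset with $\{0,1\}$-valued indicator function $f$. For a multiset over $E$ with indicator function $f$ (multiplicities), assuming $f(\emptyset)\ne0$, it is a powerful multiset if $\log_2\Big(\sum_{Y\subseteq E} f(Y)\big/\sum_{Y\subseteq E\setminus X} f(Y)\Big)$ is an integer for all $X\subseteq E$. For $e\in E$, the contraction $S/e$ is the multiset over $E\setminus\{e\}$ with indicator function $(f/e)(X)=f(X)$, and the deletion $S\setminus e$ is the multiset over $E\setminus\{e\}$ with indicator function $(f\setminus e)(X)=f(X)+f(X\cup\{e\})$, for $X\subseteq E\setminus\{e\}$. *)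

theory Defs
  imports Complex_Main
begin

definition powerful_set :: "'a set \<Rightarrow> 'a set set \<Rightarrow> bool" where
  "powerful_set E S \<longleftrightarrow> S \<subseteq> Pow E \<and>
     (\<forall>X. X \<subseteq> E \<longrightarrow> (\<exists>k::nat. card {Y \<in> S. Y \<subseteq> X} = 2 ^ k))"

definition set_indicator :: "'a set set \<Rightarrow> 'a set \<Rightarrow> nat" where
  "set_indicator S Y = (if Y \<in> S then 1 else 0)"

definition powerful_multiset :: "'a set \<Rightarrow> ('a set \<Rightarrow> nat) \<Rightarrow> bool" where
  "powerful_multiset E f \<longleftrightarrow> f {} \<noteq> 0 \<and>
     (\<forall>X. X \<subseteq> E \<longrightarrow>
        log 2 (real (\<Sum>Y\<in>Pow E. f Y) / real (\<Sum>Y\<in>Pow (E - X). f Y)) \<in> \<int>)"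

definition contraction :: "('a set \<Rightarrow> nat) \<Rightarrow> 'a \<Rightarrow> 'a set \<Rightarrow> nat" where
  "contraction f e X = f X"

definition deletion :: "('a set \<Rightarrow> nat) \<Rightarrow> 'a \<Rightarrow> 'a set \<Rightarrow> nat" where
  "deletion f e X = f X + f (insert e X)"

end

theory Submission
  imports Defs
begin

lemma log_pow2_int:
  fixes a b :: nat
  shows "log 2 (real ((2::nat)^a) / real ((2::nat)^b)) \<in> \<int>"
proof -
  have "real ((2::nat)^a) / real ((2::nat)^b) = 2 powr (real a - real b)"
    by (simp add: powr_diff powr_realpow)
  then have "log 2 (real ((2::nat)^a) / real ((2::nat)^b)) = real a - real b"
    by simp
  then show ?thesis by (metis Ints_diff Ints_of_nat)
qed

lemma sum_ind:
  assumes "finite A"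
  shows "(\<Sum>Y\<in>Pow A. set_indicator S Y) = card {Y \<in> S. Y \<subseteq> A}"
proof -
  have "(\<Sum>Y\<in>Pow A. set_indicator S Y) = (\<Sum>Y\<in>Pow A \<inter> S. 1)"
    unfolding set_indicator_def using assms by (simp add: sum.If_cases)
  also have "Pow A \<inter> S = {Y \<in> S. Y \<subseteq> A}" by auto
  finally show ?thesis by simp
qed

lemma sum_del:
  assumes "finite A" "e \<notin> A"
  shows "(\<Sum>Y\<in>Pow A. deletion g e Y) = (\<Sum>Y\<in>Pow (insert e A). g Y)"
proof -
  have d: "Pow A \<inter> insert e ` Pow A = {}" using assms(2) by auto
  have inj: "inj_on (insert e) (Pow A)" using assms(2)
    unfolding inj_on_def by (metis Pow_iff insert_absorb insert_ident subset_iff)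
  have "(\<Sum>Y\<in>Pow (insert e A). g Y) = (\<Sum>Y\<in>Pow A. g Y) + (\<Sum>Y\<in>insert e ` Pow A. g Y)"
    unfolding Pow_insert using assms d by (simp add: sum.union_disjoint)
  also have "(\<Sum>Y\<in>insert e ` Pow A. g Y) = (\<Sum>Y\<in>Pow A. g (insert e Y))"
    using inj by (simp add: sum.reindex)
  finally show ?thesis unfolding deletion_def by (simp add: sum.distrib)
qed

theorem corollary1:
  fixes E :: "'a set" and S :: "'a set set" and e :: 'a
  assumes "finite E"
    and "powerful_set E S"
    and "e \<in> E"
  shows "powerful_multiset (E - {e}) (contraction (set_indicator S) e)
       \<and> powerful_multiset (E - {e}) (deletion (set_indicator S) e)"
proof -
  have P: "\<And>X. X \<subseteq> E \<Longrightarrow> \<exists>k::nat. card {Y \<in> S. Y \<subseteq> X} = 2 ^ k"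
    using assms(2) unfolding powerful_set_def by blast
  have e0: "{} \<in> S"
  proof -
    obtain k where k: "card {Y \<in> S. Y \<subseteq> {}} = 2 ^ k" using P[of "{}"] by auto
    then have "{Y \<in> S. Y \<subseteq> {}} \<noteq> {}" by (metis card.empty power_not_zero zero_neq_numeral)
    then show ?thesis by auto
  qed
  have fE: "finite (E - {e})" using assms(1) by simp
  have C: "powerful_multiset (E - {e}) (contraction (set_indicator S) e)"
    unfolding powerful_multiset_def
  proof (intro conjI allI impI)
    show "contraction (set_indicator S) e {} \<noteq> 0"
      using e0 by (simp add: contraction_def set_indicator_def)
  next
    fix X assume X: "X \<subseteq> E - {e}"
    obtain a where a: "card {Y \<in> S. Y \<subseteq> E - {e}} = 2 ^ a" using P[of "E - {e}"] by auto
    obtain b where b: "card {Y \<in> S. Y \<subseteq> E - {e} - X} = 2 ^ b" using P[of "E - {e} - X"] by auto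
    have "(\<Sum>Y\<in>Pow (E - {e}). contraction (set_indicator S) e Y) = 2 ^ a"
      using sum_ind[OF fE, of S] a by (simp add: contraction_def)
    moreover have "(\<Sum>Y\<in>Pow (E - {e} - X). contraction (set_indicator S) e Y) = 2 ^ b"
      using sum_ind[of "E - {e} - X" S] b fE by (simp add: contraction_def)
    ultimately show "log 2 (real (\<Sum>Y\<in>Pow (E - {e}). contraction (set_indicator S) e Y) /
           real (\<Sum>Y\<in>Pow (E - {e} - X). contraction (set_indicator S) e Y)) \<in> \<int>"
      using log_pow2_int by metis
  qed
  have D: "powerful_multiset (E - {e}) (deletion (set_indicator S) e)"
    unfolding powerful_multiset_def
  proof (intro conjI allI impI)
    show "deletion (set_indicator S) e {} \<noteq> 0"
      using e0 by (simp add: deletion_def set_indicator_def)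
  next
    fix X assume X: "X \<subseteq> E - {e}"
    have i1: "insert e (E - {e}) = E" using assms(3) by auto
    have fX: "finite (E - {e} - X)" using fE by simp
    obtain a where a: "card {Y \<in> S. Y \<subseteq> E} = 2 ^ a" using P[of "E"] by auto
    obtain b where b: "card {Y \<in> S. Y \<subseteq> insert e (E - {e} - X)} = 2 ^ b"
      using P[of "insert e (E - {e} - X)"] assms(3) by auto
    have "(\<Sum>Y\<in>Pow (E - {e}). deletion (set_indicator S) e Y) = 2 ^ a"
      using sum_del[OF fE, of e "set_indicator S"] sum_ind[OF assms(1), of S] a i1 by simp
    moreover have "(\<Sum>Y\<in>Pow (E - {e} - X). deletion (set_indicator S) e Y) = 2 ^ b"
      using sum_del[OF fX, of e "set_indicator S"] sum_ind[of "insert e (E - {e} - X)" S] b fX by simp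
    ultimately show "log 2 (real (\<Sum>Y\<in>Pow (E - {e}). deletion (set_indicator S) e Y) /
           real (\<Sum>Y\<in>Pow (E - {e} - X). deletion (set_indicator S) e Y)) \<in> \<int>"
      using log_pow2_int by metis
  qed
  show ?thesis using C D by blast
qed

end
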